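(* Let $m+n\ge 3$. Every element $X\in\mathfrak{stl}(m,n,\mathcal A)$ can be written uniquely as $X=p+h+q$ with $p\in P$, $h\in H$, $q\in Q$.
   Context: Standing assumptions: $K$ is a field with $\operatorname{char}K\ne 2,3$, and $\mathcal A$ is an associative unital $K$-algebra. For $1\le i,j\le m+n$ put $\tau_{ij}=0$ if $i,j\le m$ or $i,j\ge m+1$, and $\tau_{ij}=1$ otherwise. A Leibniz superalgebra is a $\mathbb Z_2$-graded $K$-space with a bilinear bracket respecting the grading and satisfying $[[a,b],c]=[a,[b,c]]-(-1)^{|a||b|}[b,[a,c]]$. The Steinberg Leibniz superalgebra $\mathfrak{stl}(m,n,\mathcal A)$ is the Leibniz superalgebra generated by $v_{ij}(a)$, $1\le i\ne j\le m+n$, $a\in\mathcal A$, of degree $\tau_{ij}$, subject to: (1) $v_{ij}$ is $K$-linear in $a$; (2) $[v_{ij}(a),v_{kl}(b)]=0$ if $i\ne l$, $j\ne k$; (3) $[v_{ij}(a),v_{kl}(b)]=v_{il}(ab)$ if $i\ne l$, $j=k$; (4) $[v_{ij}(a),v_{kl}(b)]=-(-1)^{\tau_{ij}\tau_{kl}}v_{kj}(ba)$ if $i=l$, $j\ne k$. $P$ (resp. $Q$) is the $K$-subspace of $\mathfrak{stl}(m,n,\mathcal A)$ spanned by the $v_{ij}(a)$ with $i<j$ (resp. $i>j$), $a\in\mathcal A$. For $i\ne j$ and $a,b\in\mathcal A$ let $H_{ij}(a,b)=[v_{ij}(a),v_{ji}(b)]$, and let $H$ be the $K$-subspace spanned by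 all $H_{ij}(a,b)$. *)

theory Defs
  imports Main
begin

definition kalg :: "('k::field \<Rightarrow> 'a::ring_1 \<Rightarrow> 'a) \<Rightarrow> bool" where
  "kalg sm \<longleftrightarrow> (\<forall>c d x y.
      sm c (x + y) = sm c x + sm c y \<and> sm (c + d) x = sm c x + sm d x \<and>
      sm (c * d) x = sm c (sm d x) \<and> sm 1 x = x \<and>
      sm c (x * y) = sm c x * y \<and> sm c (x * y) = x * sm c y)"

text \<open>Nonassociative monomials in the generators v_ij(a).\<close>
datatype 'a mon = Gen nat nat 'a | Br "'a mon" "'a mon"

definition tau :: "nat \<Rightarrow> nat \<Rightarrow> nat \<Rightarrow> nat" where
  "tau m i j = (if (i \<le> m \<and> j \<le> m) \<or> (m + 1 \<le> i \<and> m + 1 \<le> j) then 0 else 1)"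

fun deg :: "nat \<Rightarrow> 'a mon \<Rightarrow> nat" where
  "deg m (Gen i j a) = tau m i j"
| "deg m (Br u v) = (deg m u + deg m v) mod 2"

fun wf_mon :: "nat \<Rightarrow> 'a mon \<Rightarrow> bool" where
  "wf_mon N (Gen i j a) = (1 \<le> i \<and> i \<le> N \<and> 1 \<le> j \<and> j \<le> N \<and> i \<noteq> j)"
| "wf_mon N (Br u v) = (wf_mon N u \<and> wf_mon N v)"

text \<open>The free (nonassociative) K-algebra on the generators: finitely supported
K-valued functions on well-formed monomials, with the bilinear bracket.\<close>
definition freeA :: "nat \<Rightarrow> ('a mon \<Rightarrow> 'k::field) set" where
  "freeA N = {f. finite {u. f u \<noteq> 0} \<and> (\<forall>u. f u \<noteq> 0 \<longrightarrow> wf_mon N u)}"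

definition dlt :: "'a mon \<Rightarrow> 'a mon \<Rightarrow> 'k::field" where
  "dlt u = (\<lambda>w. if w = u then 1 else 0)"

fun brk :: "('a mon \<Rightarrow> 'k::field) \<Rightarrow> ('a mon \<Rightarrow> 'k) \<Rightarrow> 'a mon \<Rightarrow> 'k" where
  "brk f g (Gen i j a) = 0"
| "brk f g (Br u v) = f u * g v"

definition sgn1 :: "nat \<Rightarrow> 'k::field" where
  "sgn1 e = (- 1) ^ e"

inductive_set kspan :: "('b \<Rightarrow> 'k::field) set \<Rightarrow> ('b \<Rightarrow> 'k) set" for S where
  zero: "(\<lambda>_. 0) \<in> kspan S"
| add: "x \<in> S \<Longrightarrow> y \<in> kspan S \<Longrightarrow> (\<lambda>w. c * x w + y w) \<in> kspan S"

text \<open>Defining relations of stl(m,n,A) together with the super Leibniz identity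
(imposed on monomials, which are homogeneous and span).\<close>
definition stl_rels :: "nat \<Rightarrow> nat \<Rightarrow> ('k::field \<Rightarrow> 'a::ring_1 \<Rightarrow> 'a) \<Rightarrow> ('a mon \<Rightarrow> 'k) set" where
  "stl_rels m n sm =
     {(\<lambda>w. dlt (Gen i j (a + b)) w - dlt (Gen i j a) w - dlt (Gen i j b) w) | i j a b.
        wf_mon (m + n) (Gen i j a)}
   \<union> {(\<lambda>w. dlt (Gen i j (sm c a)) w - c * dlt (Gen i j a) w) | i j a c.
        wf_mon (m + n) (Gen i j a)}
   \<union> {dlt (Br (Gen i j a) (Gen k l b)) | i j k l a b.
        wf_mon (m + n) (Gen i j a) \<and> wf_mon (m + n) (Gen k l b) \<and> i \<noteq> l \<and> j \<noteq> k}
   \<union> {(\<lambda>w. dlt (Br (Gen i j a) (Gen k l b)) w - dlt (Gen i l (a * b)) w) | i j k l a b.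
        wf_mon (m + n) (Gen i j a) \<and> wf_mon (m + n) (Gen k l b) \<and> i \<noteq> l \<and> j = k}
   \<union> {(\<lambda>w. dlt (Br (Gen i j a) (Gen k l b)) w
            + sgn1 (tau m i j * tau m k l) * dlt (Gen k j (b * a)) w) | i j k l a b.
        wf_mon (m + n) (Gen i j a) \<and> wf_mon (m + n) (Gen k l b) \<and> i = l \<and> j \<noteq> k}
   \<union> {(\<lambda>w. dlt (Br (Br u v) x) w - dlt (Br u (Br v x)) w
            + sgn1 (deg m u * deg m v) * dlt (Br v (Br u x)) w) | u v x.
        wf_mon (m + n) u \<and> wf_mon (m + n) v \<and> wf_mon (m + n) x}"

text \<open>The two-sided ideal of the free algebra generated by the relations;
stl(m,n,A) is freeA / stl_ideal.\<close>
inductive_set stl_ideal :: "nat \<Rightarrow> nat \<Rightarrow> ('k::field \<Rightarrow> 'a::ring_1 \<Rightarrow> 'a) \<Rightarrow> ('a mon \<Rightarrow> 'k) set"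
  for m n sm where
  rel: "x \<in> stl_rels m n sm \<Longrightarrow> x \<in> stl_ideal m n sm"
| zero: "(\<lambda>_. 0) \<in> stl_ideal m n sm"
| add: "x \<in> stl_ideal m n sm \<Longrightarrow> y \<in> stl_ideal m n sm \<Longrightarrow> (\<lambda>w. c * x w + y w) \<in> stl_ideal m n sm"
| brl: "x \<in> stl_ideal m n sm \<Longrightarrow> y \<in> freeA (m + n) \<Longrightarrow> brk x y \<in> stl_ideal m n sm"
| brr: "x \<in> stl_ideal m n sm \<Longrightarrow> y \<in> freeA (m + n) \<Longrightarrow> brk y x \<in> stl_ideal m n sm"

text \<open>Preimages in the free algebra of P, Q and H.\<close>
definition Pspan :: "nat \<Rightarrow> ('a mon \<Rightarrow> 'k::field) set" where
  "Pspan N = kspan {dlt (Gen i j a) | i j a. wf_mon N (Gen i j a) \<and> i < j}"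

definition Qspan :: "nat \<Rightarrow> ('a mon \<Rightarrow> 'k::field) set" where
  "Qspan N = kspan {dlt (Gen i j a) | i j a. wf_mon N (Gen i j a) \<and> i > j}"

definition Hspan :: "nat \<Rightarrow> ('a mon \<Rightarrow> 'k::field) set" where
  "Hspan N = kspan {dlt (Br (Gen i j a) (Gen j i b)) | i j a b. wf_mon N (Gen i j a)}"

end

theory Submission
  imports Defs
begin


locale stc =
  fixes m n :: nat and sm :: "'k::field \<Rightarrow> 'a::ring_1 \<Rightarrow> 'a"
  assumes kal: "kalg sm"
begin

abbreviation "NN \<equiv> m + n"
abbreviation "II \<equiv> stl_ideal m n sm"

definition cg :: "('a mon \<Rightarrow> 'k) \<Rightarrow> ('a mon \<Rightarrow> 'k) \<Rightarrow> bool" where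
  "cg A B \<longleftrightarrow> (\<lambda>w. A w - B w) \<in> II"

lemma I_lin: "x \<in> II \<Longrightarrow> y \<in> II \<Longrightarrow> (\<lambda>w. c * x w + d * y w) \<in> II"
proof -
  assume x: "x \<in> II" and y: "y \<in> II"
  have "(\<lambda>w. d * y w + 0) \<in> II" using stl_ideal.add[OF y stl_ideal.zero] .
  from stl_ideal.add[OF x this, of c] show ?thesis by simp
qed

lemma I_eq: "x \<in> II \<Longrightarrow> x = y \<Longrightarrow> y \<in> II" by simp

lemma cg_refl: "cg A A" unfolding cg_def using stl_ideal.zero by simp

lemma cg_sym: "cg A B \<Longrightarrow> cg B A"
  unfolding cg_def
proof -
  assume h: "(\<lambda>w. A w - B w) \<in> II"
  from I_lin[OF h stl_ideal.zero, of "-1" 0] show "(\<lambda>w. B w - A w) \<in> II" by simp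
qed

lemma cg_trans: "cg A B \<Longrightarrow> cg B C \<Longrightarrow> cg A C"
  unfolding cg_def by (erule I_eq[OF I_lin[where c=1 and d=1]]) auto

lemma cg_lin: "cg A A' \<Longrightarrow> cg B B' \<Longrightarrow> cg (\<lambda>w. c * A w + d * B w) (\<lambda>w. c * A' w + d * B' w)"
  unfolding cg_def by (erule I_eq[OF I_lin[where c=c and d=d]]) (auto simp: algebra_simps)

lemma cg_I: "x \<in> II \<Longrightarrow> cg x (\<lambda>_. 0)" unfolding cg_def by simp
lemma cg_I': "cg x (\<lambda>_. 0) \<Longrightarrow> x \<in> II" unfolding cg_def by simp

lemma freeA_I: "finite F \<Longrightarrow> (\<forall>u\<in>F. wf_mon N u) \<Longrightarrow> (\<forall>w. w \<notin> F \<longrightarrow> f w = 0) \<Longrightarrow> f \<in> freeA N"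
  unfolding freeA_def by (auto intro: finite_subset[of _ F])

lemma freeA_D: "f \<in> freeA N \<Longrightarrow> finite {u. f u \<noteq> 0} \<and> (\<forall>u. f u \<noteq> 0 \<longrightarrow> wf_mon N u)"
  unfolding freeA_def by auto

lemma freeA_lin: "x \<in> freeA N \<Longrightarrow> y \<in> freeA N \<Longrightarrow> (\<lambda>w. c * x w + d * y w) \<in> freeA N"
  unfolding freeA_def
  apply (auto intro: finite_subset[of _ "{u. x u \<noteq> 0} \<union> {u. y u \<noteq> 0}"])
  by (metis add.right_neutral mult_zero_right)

lemma zero_freeA: "(\<lambda>_. 0) \<in> freeA N" unfolding freeA_def by auto

lemma dlt_freeA: "wf_mon N u \<Longrightarrow> dlt u \<in> freeA N"
  by (rule freeA_I[of "{u}"]) (auto simp: dlt_def)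

lemma brk_supp: "brk x y w \<noteq> 0 \<Longrightarrow> \<exists>u v. w = Br u v \<and> x u \<noteq> 0 \<and> y v \<noteq> 0"
  by (cases w) auto

lemma brk_freeA: "x \<in> freeA N \<Longrightarrow> y \<in> freeA N \<Longrightarrow> brk x y \<in> freeA N"
proof -
  assume x: "x \<in> freeA N" and y: "y \<in> freeA N"
  have "{w. brk x y w \<noteq> 0} \<subseteq> (\<lambda>(u,v). Br u v) ` ({u. x u \<noteq> 0} \<times> {u. y u \<noteq> 0})"
    by (auto dest!: brk_supp)
  moreover have "finite ((\<lambda>(u,v). Br u v) ` ({u. x u \<noteq> 0} \<times> {u. y u \<noteq> 0}))"
    using x y unfolding freeA_def by auto
  ultimately have "finite {w. brk x y w \<noteq> 0}" by (rule finite_subset)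
  then show ?thesis using x y unfolding freeA_def
    by (auto dest!: brk_supp)
qed

lemma brk_lin_left: "brk (\<lambda>w. c * x w + d * y w) z = (\<lambda>w. c * brk x z w + d * brk y z w)"
  apply (rule ext) subgoal for w by (cases w) (auto simp: algebra_simps) done
lemma brk_lin_right: "brk z (\<lambda>w. c * x w + d * y w) = (\<lambda>w. c * brk z x w + d * brk z y w)"
  apply (rule ext) subgoal for w by (cases w) (auto simp: algebra_simps) done
lemma brk_zero_left: "brk (\<lambda>_. 0) z = (\<lambda>_. 0)"
  apply (rule ext) subgoal for w by (cases w) auto done
lemma brk_zero_right: "brk z (\<lambda>_. 0) = (\<lambda>_. 0)"
  apply (rule ext) subgoal for w by (cases w) auto done
lemma brk_dlt: "brk (dlt u) (dlt v) = dlt (Br u v)"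
  apply (rule ext) subgoal for w by (cases w) (auto simp: dlt_def) done

lemma rels_freeA: "x \<in> stl_rels m n sm \<Longrightarrow> x \<in> freeA NN"
  unfolding stl_rels_def
  apply (elim UnE CollectE exE conjE)
  subgoal for i j a b by (rule freeA_I[of "{Gen i j (a+b), Gen i j a, Gen i j b}"]) (auto simp: dlt_def)
  subgoal for i j a c by (rule freeA_I[of "{Gen i j (sm c a), Gen i j a}"]) (auto simp: dlt_def)
  subgoal for i j k l a b by (rule freeA_I[of "{Br (Gen i j a) (Gen k l b)}"]) (auto simp: dlt_def)
  subgoal for i j k l a b by (rule freeA_I[of "{Br (Gen i j a) (Gen k l b), Gen i l (a*b)}"]) (auto simp: dlt_def)
  subgoal for i j k l a b by (rule freeA_I[of "{Br (Gen i j a) (Gen k l b), Gen k j (b*a)}"]) (auto simp: dlt_def)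
  subgoal for u v x by (rule freeA_I[of "{Br (Br u v) x, Br u (Br v x), Br v (Br u x)}"]) (simp_all add: dlt_def)
  done

lemma I_freeA: "x \<in> II \<Longrightarrow> x \<in> freeA NN"
proof (induction rule: stl_ideal.induct)
  case (add x y c)
  then show ?case using freeA_lin[of x _ y c 1] by simp
qed (simp_all add: rels_freeA zero_freeA brk_freeA)

lemma cg_brk_left: "cg A A' \<Longrightarrow> Y \<in> freeA NN \<Longrightarrow> cg (brk A Y) (brk A' Y)"
  unfolding cg_def
proof -
  assume h: "(\<lambda>w. A w - A' w) \<in> II" and y: "Y \<in> freeA NN"
  have "brk (\<lambda>w. A w - A' w) Y = (\<lambda>w. brk A Y w - brk A' Y w)"
    using brk_lin_left[of 1 A "-1" A' Y] by simp
  with stl_ideal.brl[OF h y] show "(\<lambda>w. brk A Y w - brk A' Y w) \<in> II" by simp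
qed
lemma cg_brk_right: "cg A A' \<Longrightarrow> Y \<in> freeA NN \<Longrightarrow> cg (brk Y A) (brk Y A')"
  unfolding cg_def
proof -
  assume h: "(\<lambda>w. A w - A' w) \<in> II" and y: "Y \<in> freeA NN"
  have "brk Y (\<lambda>w. A w - A' w) = (\<lambda>w. brk Y A w - brk Y A' w)"
    using brk_lin_right[of Y 1 A "-1" A'] by simp
  with stl_ideal.brr[OF h y] show "(\<lambda>w. brk Y A w - brk Y A' w) \<in> II" by simp
qed

lemma cg_freeA: "cg A B \<Longrightarrow> B \<in> freeA NN \<Longrightarrow> A \<in> freeA NN"
  unfolding cg_def
proof -
  assume h: "(\<lambda>w. A w - B w) \<in> II" and b: "B \<in> freeA NN"
  from freeA_lin[OF I_freeA[OF h] b, of 1 1] show "A \<in> freeA NN" by simp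
qed

lemma cg_brk: "cg A A' \<Longrightarrow> cg B B' \<Longrightarrow> A' \<in> freeA NN \<Longrightarrow> B \<in> freeA NN \<Longrightarrow> cg (brk A B) (brk A' B')"
  by (rule cg_trans[OF cg_brk_left cg_brk_right])


lemma R1: "wf_mon NN (Gen i j a) \<Longrightarrow> cg (dlt (Gen i j (a+b))) (\<lambda>w. dlt (Gen i j a) w + dlt (Gen i j b) w)"
proof -
  assume h: "wf_mon NN (Gen i j a)"
  have "(\<lambda>w. dlt (Gen i j (a + b)) w - dlt (Gen i j a) w - dlt (Gen i j b) w) \<in> stl_rels m n sm"
    unfolding stl_rels_def apply (rule UnI1, rule UnI1, rule UnI1, rule UnI1, rule UnI1) using h by blast
  from stl_ideal.rel[OF this] show ?thesis unfolding cg_def by (simp add: algebra_simps)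
qed

lemma R1s: "wf_mon NN (Gen i j a) \<Longrightarrow> cg (dlt (Gen i j (sm c a))) (\<lambda>w. c * dlt (Gen i j a) w)"
proof -
  assume h: "wf_mon NN (Gen i j a)"
  have "(\<lambda>w. dlt (Gen i j (sm c a)) w - c * dlt (Gen i j a) w) \<in> stl_rels m n sm"
    unfolding stl_rels_def apply (rule UnI1, rule UnI1, rule UnI1, rule UnI1, rule UnI2) using h by blast
  from stl_ideal.rel[OF this] show ?thesis unfolding cg_def by (simp add: algebra_simps)
qed

lemma R2: "wf_mon NN (Gen i j a) \<Longrightarrow> wf_mon NN (Gen k l b) \<Longrightarrow> i \<noteq> l \<Longrightarrow> j \<noteq> k \<Longrightarrow>
  cg (brk (dlt (Gen i j a)) (dlt (Gen k l b))) (\<lambda>_. 0)"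
proof -
  assume h: "wf_mon NN (Gen i j a)" "wf_mon NN (Gen k l b)" "i \<noteq> l" "j \<noteq> k"
  have "dlt (Br (Gen i j a) (Gen k l b)) \<in> stl_rels m n sm"
    unfolding stl_rels_def apply (rule UnI1, rule UnI1, rule UnI1, rule UnI2) using h by blast
  from stl_ideal.rel[OF this] show ?thesis unfolding cg_def by (simp add: brk_dlt)
qed

lemma R3: "wf_mon NN (Gen i j a) \<Longrightarrow> wf_mon NN (Gen j l b) \<Longrightarrow> i \<noteq> l \<Longrightarrow>
  cg (brk (dlt (Gen i j a)) (dlt (Gen j l b))) (dlt (Gen i l (a * b)))"
proof -
  assume h: "wf_mon NN (Gen i j a)" "wf_mon NN (Gen j l b)" "i \<noteq> l"
  have "(\<lambda>w. dlt (Br (Gen i j a) (Gen j l b)) w - dlt (Gen i l (a * b)) w) \<in> stl_rels m n sm"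
    unfolding stl_rels_def apply (rule UnI1, rule UnI1, rule UnI2) using h by blast
  from stl_ideal.rel[OF this] show ?thesis unfolding cg_def by (simp add: brk_dlt)
qed

lemma R4: "wf_mon NN (Gen i j a) \<Longrightarrow> wf_mon NN (Gen k i b) \<Longrightarrow> j \<noteq> k \<Longrightarrow>
  cg (brk (dlt (Gen i j a)) (dlt (Gen k i b)))
     (\<lambda>w. (- sgn1 (tau m i j * tau m k i)) * dlt (Gen k j (b * a)) w)"
proof -
  assume h: "wf_mon NN (Gen i j a)" "wf_mon NN (Gen k i b)" "j \<noteq> k"
  have "(\<lambda>w. dlt (Br (Gen i j a) (Gen k i b)) w + sgn1 (tau m i j * tau m k i) * dlt (Gen k j (b * a)) w)
     \<in> stl_rels m n sm"
    unfolding stl_rels_def apply (rule UnI1, rule UnI2) using h by blast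
  from stl_ideal.rel[OF this] show ?thesis unfolding cg_def by (simp add: brk_dlt)
qed

lemma RL: "wf_mon NN u \<Longrightarrow> wf_mon NN v \<Longrightarrow> wf_mon NN x \<Longrightarrow>
  cg (brk (brk (dlt u) (dlt v)) (dlt x))
     (\<lambda>w. brk (dlt u) (brk (dlt v) (dlt x)) w - sgn1 (deg m u * deg m v) * brk (dlt v) (brk (dlt u) (dlt x)) w)"
proof -
  assume h: "wf_mon NN u" "wf_mon NN v" "wf_mon NN x"
  have "(\<lambda>w. dlt (Br (Br u v) x) w - dlt (Br u (Br v x)) w
            + sgn1 (deg m u * deg m v) * dlt (Br v (Br u x)) w) \<in> stl_rels m n sm"
    unfolding stl_rels_def apply (rule UnI2) using h by blast
  from stl_ideal.rel[OF this] show ?thesis unfolding cg_def by (simp add: brk_dlt algebra_simps)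
qed


lemma kspan_scale: "y \<in> kspan S \<Longrightarrow> (\<lambda>w. d * y w) \<in> kspan S"
proof (induction rule: kspan.induct)
  case zero then show ?case by (simp add: kspan.zero)
next
  case (add x y c)
  from kspan.add[OF add.hyps(1) add.IH, of "d * c"] show ?case by (simp add: algebra_simps)
qed

lemma kspan_lin: "x \<in> kspan S \<Longrightarrow> y \<in> kspan S \<Longrightarrow> (\<lambda>w. c * x w + d * y w) \<in> kspan S"
proof (induction rule: kspan.induct)
  case zero then show ?case using kspan_scale by simp
next
  case (add g x c')
  from kspan.add[OF add.hyps(1) add.IH[OF add.prems], of "c * c'"] show ?case by (simp add: algebra_simps)
qed

lemma kspan_gen: "g \<in> S \<Longrightarrow> g \<in> kspan S"
  using kspan.add[OF _ kspan.zero, of g S 1] by simp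

lemma kspan_mono: "x \<in> kspan S \<Longrightarrow> S \<subseteq> T \<Longrightarrow> x \<in> kspan T"
  by (induction rule: kspan.induct) (auto intro: kspan.zero kspan.add)

lemma kspan_freeA: "x \<in> kspan S \<Longrightarrow> S \<subseteq> freeA N \<Longrightarrow> x \<in> freeA N"
proof (induction rule: kspan.induct)
  case zero then show ?case by (simp add: zero_freeA)
next
  case (add x y c)
  then show ?case using freeA_lin[of x N y c 1] by auto
qed

definition inK :: "('a mon \<Rightarrow> 'k) set \<Rightarrow> ('a mon \<Rightarrow> 'k) \<Rightarrow> bool" where
  "inK S X \<longleftrightarrow> X \<in> freeA NN \<and> (\<exists>s\<in>kspan S. cg X s)"

lemma inK_lin: "inK S X \<Longrightarrow> inK S Y \<Longrightarrow> inK S (\<lambda>w. c * X w + d * Y w)"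
  unfolding inK_def by (auto intro!: freeA_lin kspan_lin cg_lin)

lemma inK_scale: "inK S X \<Longrightarrow> inK S (\<lambda>w. c * X w)"
  using inK_lin[of S X X c 0] by simp

lemma inK_cg: "cg X Y \<Longrightarrow> inK S Y \<Longrightarrow> inK S X"
  unfolding inK_def by (auto intro: cg_freeA cg_trans)

lemma inK_zero: "inK S (\<lambda>_. 0)"
  unfolding inK_def by (auto intro!: zero_freeA bexI[of _ "\<lambda>_. 0"] cg_refl kspan.zero)

lemma inK_gen: "S \<subseteq> freeA NN \<Longrightarrow> g \<in> S \<Longrightarrow> inK S g"
  unfolding inK_def by (auto intro!: bexI[of _ g] cg_refl kspan_gen)

lemma inK_mono: "S \<subseteq> T \<Longrightarrow> inK S X \<Longrightarrow> inK T X"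
  unfolding inK_def by (auto intro: kspan_mono)

lemma brk_scale_left: "brk (\<lambda>w. c * A w) x = (\<lambda>w. c * brk A x w)"
  using brk_lin_left[of c A 0 A x] by simp
lemma brk_scale_right: "brk x (\<lambda>w. c * A w) = (\<lambda>w. c * brk x A w)"
  using brk_lin_right[of x c A 0 A] by simp

lemma lift_left: "X \<in> kspan S \<Longrightarrow> S \<subseteq> freeA NN \<Longrightarrow> (\<forall>g\<in>S. inK T (brk g Y)) \<Longrightarrow> inK T (brk X Y)"
proof (induction rule: kspan.induct)
  case zero then show ?case by (simp add: brk_zero_left inK_zero)
next
  case (add x y c)
  then have "inK T (\<lambda>w. c * brk x Y w + 1 * brk y Y w)" by (intro inK_lin) auto
  then show ?case using brk_lin_left[of c x 1 y Y] by simp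
qed

lemma lift_right: "Y \<in> kspan S \<Longrightarrow> S \<subseteq> freeA NN \<Longrightarrow> (\<forall>g\<in>S. inK T (brk X g)) \<Longrightarrow> inK T (brk X Y)"
proof (induction rule: kspan.induct)
  case zero then show ?case by (simp add: brk_zero_right inK_zero)
next
  case (add x y c)
  then have "inK T (\<lambda>w. c * brk X x w + 1 * brk X y w)" by (intro inK_lin) auto
  then show ?case using brk_lin_right[of X c x 1 y] by simp
qed

lemma liftK_left: "inK S X \<Longrightarrow> S \<subseteq> freeA NN \<Longrightarrow> Y \<in> freeA NN \<Longrightarrow> (\<forall>g\<in>S. inK T (brk g Y)) \<Longrightarrow> inK T (brk X Y)"
  unfolding inK_def[of S X] by (auto intro: inK_cg[OF cg_brk_left] lift_left)

lemma liftK_right: "inK S Y \<Longrightarrow> S \<subseteq> freeA NN \<Longrightarrow> X \<in> freeA NN \<Longrightarrow> (\<forall>g\<in>S. inK T (brk X g)) \<Longrightarrow> inK T (brk X Y)"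
  unfolding inK_def[of S Y] by (auto intro: inK_cg[OF cg_brk_right] lift_right)

lemma cgbrk_l: "cg A B \<Longrightarrow> x \<in> freeA NN \<Longrightarrow> inK T (brk B x) \<Longrightarrow> inK T (brk A x)"
  by (rule inK_cg[OF cg_brk_left])
lemma cgbrk_r: "cg A B \<Longrightarrow> x \<in> freeA NN \<Longrightarrow> inK T (brk x B) \<Longrightarrow> inK T (brk x A)"
  by (rule inK_cg[OF cg_brk_right])

lemma cg_rearr: "cg A (\<lambda>w. B w - c * C w) \<Longrightarrow> cg B (\<lambda>w. A w + c * C w)"
  unfolding cg_def
proof -
  assume h: "(\<lambda>w. A w - (B w - c * C w)) \<in> II"
  from I_lin[OF h stl_ideal.zero, of "-1" 0] show "(\<lambda>w. B w - (A w + c * C w)) \<in> II"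
    by (simp add: algebra_simps)
qed


definition "Vg = {dlt (Gen i j a) | i j a. wf_mon NN (Gen i j a)}"
definition "Hg = {dlt (Br (Gen i j a) (Gen j i b)) | i j a b. wf_mon NN (Gen i j a)}"
definition "Gg = Vg \<union> Hg"

lemma Vg_freeA: "Vg \<subseteq> freeA NN" unfolding Vg_def by (auto intro: dlt_freeA)
lemma Hg_freeA: "Hg \<subseteq> freeA NN" unfolding Hg_def by (auto intro!: dlt_freeA)
lemma Gg_freeA: "Gg \<subseteq> freeA NN" unfolding Gg_def using Vg_freeA Hg_freeA by auto

lemma inV_gen: "wf_mon NN (Gen i j a) \<Longrightarrow> inK Vg (dlt (Gen i j a))"
  by (rule inK_gen[OF Vg_freeA]) (auto simp: Vg_def)

lemma inVS: "inK Vg X \<Longrightarrow> inK Gg X"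
  by (rule inK_mono[of Vg]) (auto simp: Gg_def)

lemma E1V: "wf_mon NN (Gen i j a) \<Longrightarrow> wf_mon NN (Gen k l b) \<Longrightarrow> \<not> (i = l \<and> j = k) \<Longrightarrow>
   inK Vg (brk (dlt (Gen i j a)) (dlt (Gen k l b)))"
proof -
  assume h1: "wf_mon NN (Gen i j a)" and h2: "wf_mon NN (Gen k l b)" and nn: "\<not> (i = l \<and> j = k)"
  consider "i \<noteq> l \<and> j \<noteq> k" | "j = k" "i \<noteq> l" | "i = l" "j \<noteq> k" using nn by blast
  then show ?thesis
  proof cases
    case 1 then show ?thesis using inK_cg[OF R2[OF h1 h2] inK_zero] by blast
  next
    case 2
    then have "cg (brk (dlt (Gen i j a)) (dlt (Gen k l b))) (dlt (Gen i l (a * b)))"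
      using R3[of i j a l b] h1 h2 by simp
    moreover have "wf_mon NN (Gen i l (a * b))" using h1 h2 2 by simp
    ultimately show ?thesis using inK_cg[OF _ inV_gen] by blast
  next
    case 3
    then have "cg (brk (dlt (Gen i j a)) (dlt (Gen k l b)))
        (\<lambda>w. (- sgn1 (tau m i j * tau m k i)) * dlt (Gen k j (b * a)) w)"
      using R4[of i j a k b] h1 h2 by simp
    moreover have "wf_mon NN (Gen k j (b * a))" using h1 h2 3 by simp
    ultimately show ?thesis using inK_cg[OF _ inK_scale[OF inV_gen]] by blast
  qed
qed

lemma E1S: "wf_mon NN (Gen i j a) \<Longrightarrow> wf_mon NN (Gen k l b) \<Longrightarrow>
   inK Gg (brk (dlt (Gen i j a)) (dlt (Gen k l b)))"
proof (cases "i = l \<and> j = k")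
  case True
  assume h1: "wf_mon NN (Gen i j a)"
  have "dlt (Br (Gen i j a) (Gen k l b)) \<in> Gg" unfolding Gg_def Hg_def using h1 True by blast
  then show ?thesis unfolding brk_dlt by (rule inK_gen[OF Gg_freeA])
next
  case False
  then show "wf_mon NN (Gen i j a) \<Longrightarrow> wf_mon NN (Gen k l b) \<Longrightarrow> ?thesis" using E1V inVS by blast
qed

lemma E2: "wf_mon NN (Gen k l c) \<Longrightarrow> wf_mon NN (Gen i j a) \<Longrightarrow> (k, l) \<noteq> (i, j) \<Longrightarrow> (k, l) \<noteq> (j, i) \<Longrightarrow>
   inK Vg (brk (dlt (Gen k l c)) (dlt (Br (Gen i j a) (Gen j i b))))"
proof -
  assume hu: "wf_mon NN (Gen k l c)" and hv: "wf_mon NN (Gen i j a)"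
     and d1: "(k, l) \<noteq> (i, j)" and d2: "(k, l) \<noteq> (j, i)"
  define u where "u = Gen k l c"
  define v where "v = Gen i j a"
  define x where "x = Gen j i b"
  have hx: "wf_mon NN x" using hv unfolding x_def by auto
  have hu': "wf_mon NN u" "wf_mon NN v" using hu hv by (auto simp: u_def v_def)
  have fx: "dlt x \<in> freeA NN" "dlt u \<in> freeA NN" "dlt v \<in> freeA NN"
    using hx hu' by (auto intro: dlt_freeA)
  have A: "inK Vg (brk (brk (dlt u) (dlt v)) (dlt x))"
  proof -
    consider "k \<noteq> j \<and> l \<noteq> i" | "l = i" | "k = j" "l \<noteq> i" by blast
    then show ?thesis
    proof cases
      case 1
      then have "cg (brk (dlt u) (dlt v)) (\<lambda>_. 0)" using R2[OF hu hv] unfolding u_def v_def by blast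
      from cgbrk_l[OF this fx(1)] show ?thesis by (simp add: brk_zero_left inK_zero)
    next
      case 2
      then have kj: "k \<noteq> j" "k \<noteq> i" using d2 hu by auto
      have "cg (brk (dlt u) (dlt v)) (dlt (Gen k j (c * a)))"
        using R3[of k i c j a] hu hv 2 kj unfolding u_def v_def by simp
      moreover have "inK Vg (brk (dlt (Gen k j (c * a))) (dlt x))"
        unfolding x_def using E1V[of k j "c * a" j i b] hu hv kj by simp
      ultimately show ?thesis by (rule cgbrk_l[OF _ fx(1)])
    next
      case 3
      then have li: "l \<noteq> j" using hu by auto
      have c1: "cg (brk (dlt u) (dlt v)) (\<lambda>w. (- sgn1 (tau m j l * tau m i j)) * dlt (Gen i l (a * c)) w)"
        using R4[of j l c i a] hu hv 3 unfolding u_def v_def by simp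
      have "inK Vg (brk (dlt (Gen i l (a * c))) (dlt x))"
        unfolding x_def using E1V[of i l "a * c" j i b] hu hv li 3 by simp
      then have "inK Vg (brk (\<lambda>w. (- sgn1 (tau m j l * tau m i j)) * dlt (Gen i l (a * c)) w) (dlt x))"
        unfolding brk_scale_left by (rule inK_scale)
      then show ?thesis by (rule cgbrk_l[OF c1 fx(1)])
    qed
  qed
  have B: "inK Vg (brk (dlt v) (brk (dlt u) (dlt x)))"
  proof -
    consider "k \<noteq> i \<and> l \<noteq> j" | "l = j" | "k = i" "l \<noteq> j" by blast
    then show ?thesis
    proof cases
      case 1
      then have "cg (brk (dlt u) (dlt x)) (\<lambda>_. 0)" using R2[OF hu, of j i b] hv unfolding u_def x_def by auto
      from cgbrk_r[OF this fx(3)] show ?thesis by (simp add: brk_zero_right inK_zero)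
    next
      case 2
      then have kj: "k \<noteq> i" "k \<noteq> j" using d1 hu by auto
      have "cg (brk (dlt u) (dlt x)) (dlt (Gen k i (c * b)))"
        using R3[of k j c i b] hu hv 2 kj unfolding u_def x_def by simp
      moreover have "inK Vg (brk (dlt v) (dlt (Gen k i (c * b))))"
        unfolding v_def using E1V[of i j a k i "c * b"] hu hv kj by simp
      ultimately show ?thesis by (rule cgbrk_r[OF _ fx(3)])
    next
      case 3
      then have li: "l \<noteq> i" using hu by auto
      have c1: "cg (brk (dlt u) (dlt x)) (\<lambda>w. (- sgn1 (tau m i l * tau m j i)) * dlt (Gen j l (b * c)) w)"
        using R4[of i l c j b] hu hv 3 unfolding u_def x_def by simp
      have "inK Vg (brk (dlt v) (dlt (Gen j l (b * c))))"
        unfolding v_def using E1V[of i j a j l "b * c"] hu hv li 3 by simp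
      then have "inK Vg (brk (dlt v) (\<lambda>w. (- sgn1 (tau m i l * tau m j i)) * dlt (Gen j l (b * c)) w))"
        unfolding brk_scale_right by (rule inK_scale)
      then show ?thesis by (rule cgbrk_r[OF c1 fx(3)])
    qed
  qed
  have "cg (brk (dlt u) (brk (dlt v) (dlt x)))
     (\<lambda>w. brk (brk (dlt u) (dlt v)) (dlt x) w + sgn1 (deg m u * deg m v) * brk (dlt v) (brk (dlt u) (dlt x)) w)"
    by (rule cg_rearr[OF RL[OF hu'(1) hu'(2) hx]])
  moreover have "inK Vg (\<lambda>w. 1 * brk (brk (dlt u) (dlt v)) (dlt x) w + sgn1 (deg m u * deg m v) * brk (dlt v) (brk (dlt u) (dlt x)) w)"
    by (rule inK_lin[OF A B])
  ultimately have "inK Vg (brk (dlt u) (brk (dlt v) (dlt x)))" using inK_cg by simp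
  then show ?thesis by (simp add: u_def v_def x_def brk_dlt)
qed


lemma vV: "wf_mon NN (Gen p q c) \<Longrightarrow> inK Vg Y \<Longrightarrow> inK Gg (brk (dlt (Gen p q c)) Y)"
  by (rule liftK_right[OF _ Vg_freeA dlt_freeA]) (auto simp: Vg_def intro: E1S)

lemma E3: "wf_mon NN (Gen p q c) \<Longrightarrow> wf_mon NN (Gen i j a) \<Longrightarrow> 1 \<le> t \<Longrightarrow> t \<le> NN \<Longrightarrow>
  t \<noteq> i \<Longrightarrow> t \<noteq> j \<Longrightarrow> t \<noteq> p \<Longrightarrow> t \<noteq> q \<Longrightarrow>
  inK Gg (brk (dlt (Gen p q c)) (dlt (Br (Gen i j a) (Gen j i b))))"
proof -
  assume hp: "wf_mon NN (Gen p q c)" and hi: "wf_mon NN (Gen i j a)" and t: "1 \<le> t" "t \<le> NN"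
    "t \<noteq> i" "t \<noteq> j" "t \<noteq> p" "t \<noteq> q"
  define u where "u = Gen p t c"
  define v where "v = Gen t q (1::'a)"
  define x where "x = Br (Gen i j a) (Gen j i b)"
  have wu: "wf_mon NN u" "wf_mon NN v" "wf_mon NN x" using hp hi t by (auto simp: u_def v_def x_def)
  have fx: "dlt x \<in> freeA NN" "dlt u \<in> freeA NN" "dlt v \<in> freeA NN" using wu by (auto intro: dlt_freeA)
  have c0: "cg (brk (dlt u) (dlt v)) (dlt (Gen p q c))"
    using R3[of p t c q 1] hp t unfolding u_def v_def by simp
  have c1: "cg (brk (dlt (Gen p q c)) (dlt x)) (brk (brk (dlt u) (dlt v)) (dlt x))"
    by (rule cg_brk_left[OF cg_sym[OF c0] fx(1)])
  have A: "inK Gg (brk (dlt u) (brk (dlt v) (dlt x)))"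
  proof -
    have Av: "inK Vg (brk (dlt v) (dlt x))" unfolding v_def x_def
      by (rule E2) (use hp hi t in auto)
    show ?thesis unfolding u_def by (rule vV[OF _ Av]) (use hp t in auto)
  qed
  have B: "inK Gg (brk (dlt v) (brk (dlt u) (dlt x)))"
  proof -
    have Bv: "inK Vg (brk (dlt u) (dlt x))" unfolding u_def x_def
      by (rule E2) (use hp hi t in auto)
    show ?thesis unfolding v_def by (rule vV[OF _ Bv]) (use hp t in auto)
  qed
  have "inK Gg (\<lambda>w. 1 * brk (dlt u) (brk (dlt v) (dlt x)) w + (- sgn1 (deg m u * deg m v)) * brk (dlt v) (brk (dlt u) (dlt x)) w)"
    by (rule inK_lin[OF A B])
  then have "inK Gg (brk (brk (dlt u) (dlt v)) (dlt x))"
    by (intro inK_cg[OF RL[OF wu]]) simp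
  then have "inK Gg (brk (dlt (Gen p q c)) (dlt x))" by (rule inK_cg[OF c1])
  then show ?thesis by (simp add: x_def)
qed

lemma third: "3 \<le> N \<Longrightarrow> \<exists>t::nat. 1 \<le> t \<and> t \<le> N \<and> t \<noteq> i \<and> t \<noteq> j"
proof -
  assume N: "3 \<le> N"
  have "(1 \<noteq> i \<and> 1 \<noteq> j) \<or> (2 \<noteq> i \<and> 2 \<noteq> j) \<or> (3 \<noteq> i \<and> 3 \<noteq> j)" by presburger
  then show ?thesis
  proof (elim disjE)
    assume "1 \<noteq> i \<and> 1 \<noteq> j" then show ?thesis using N by (intro exI[of _ 1]) auto
  next
    assume "2 \<noteq> i \<and> 2 \<noteq> j" then show ?thesis using N by (intro exI[of _ 2]) auto
  next
    assume "3 \<noteq> i \<and> 3 \<noteq> j" then show ?thesis using N by (intro exI[of _ 3]) auto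
  qed
qed

lemma vH: "3 \<le> NN \<Longrightarrow> wf_mon NN (Gen k l c) \<Longrightarrow> wf_mon NN (Gen i j a) \<Longrightarrow>
  inK Gg (brk (dlt (Gen k l c)) (dlt (Br (Gen i j a) (Gen j i b))))"
proof -
  assume N3: "3 \<le> NN" and hk: "wf_mon NN (Gen k l c)" and hi: "wf_mon NN (Gen i j a)"
  show ?thesis
  proof (cases "(k, l) = (i, j) \<or> (k, l) = (j, i)")
    case True
    obtain t where t: "1 \<le> t" "t \<le> NN" "t \<noteq> i" "t \<noteq> j" using third[OF N3] by blast
    show ?thesis by (rule E3[OF hk hi t]) (use True t in auto)
  next
    case False
    then show ?thesis using E2[OF hk hi] inVS by blast
  qed
qed

lemma vS: "3 \<le> NN \<Longrightarrow> wf_mon NN (Gen k l c) \<Longrightarrow> g \<in> Gg \<Longrightarrow> inK Gg (brk (dlt (Gen k l c)) g)"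
proof -
  assume N3: "3 \<le> NN" and hk: "wf_mon NN (Gen k l c)" and g: "g \<in> Gg"
  then consider (V) i j a where "g = dlt (Gen i j a)" "wf_mon NN (Gen i j a)"
    | (H) i j a b where "g = dlt (Br (Gen i j a) (Gen j i b))" "wf_mon NN (Gen i j a)"
    unfolding Gg_def Vg_def Hg_def by blast
  then show ?thesis
  proof cases
    case V then show ?thesis using E1S[OF hk] by simp
  next
    case H then show ?thesis using vH[OF N3 hk] by simp
  qed
qed

lemma v_inS: "3 \<le> NN \<Longrightarrow> wf_mon NN (Gen k l c) \<Longrightarrow> inK Gg Y \<Longrightarrow> inK Gg (brk (dlt (Gen k l c)) Y)"
  by (rule liftK_right[OF _ Gg_freeA dlt_freeA]) (auto intro: vS)

lemma Gg_dlt: "g \<in> Gg \<Longrightarrow> \<exists>x. g = dlt x \<and> wf_mon NN x"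
  unfolding Gg_def Vg_def Hg_def by auto

lemma hv: "3 \<le> NN \<Longrightarrow> wf_mon NN (Gen i j a) \<Longrightarrow> g \<in> Gg \<Longrightarrow>
  inK Gg (brk (dlt (Br (Gen i j a) (Gen j i b))) g)"
proof -
  assume N3: "3 \<le> NN" and hi: "wf_mon NN (Gen i j a)" and g: "g \<in> Gg"
  obtain x where gx: "g = dlt x" and wx: "wf_mon NN x" using Gg_dlt[OF g] by blast
  define u where "u = Gen i j a"
  define v where "v = Gen j i b"
  have wu: "wf_mon NN u" "wf_mon NN v" using hi by (auto simp: u_def v_def)
  have A: "inK Gg (brk (dlt u) (brk (dlt v) (dlt x)))"
    unfolding u_def using v_inS[OF N3 hi] vS[OF N3 wu(2)[unfolded v_def] g] gx v_def by simp
  have B: "inK Gg (brk (dlt v) (brk (dlt u) (dlt x)))"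
    unfolding v_def using v_inS[OF N3 wu(2)[unfolded v_def]] vS[OF N3 hi g] gx u_def by simp
  have "inK Gg (\<lambda>w. 1 * brk (dlt u) (brk (dlt v) (dlt x)) w + (- sgn1 (deg m u * deg m v)) * brk (dlt v) (brk (dlt u) (dlt x)) w)"
    by (rule inK_lin[OF A B])
  then have "inK Gg (brk (brk (dlt u) (dlt v)) (dlt x))"
    by (intro inK_cg[OF RL[OF wu wx]]) simp
  then show ?thesis by (simp add: gx u_def v_def brk_dlt)
qed

lemma GG: "3 \<le> NN \<Longrightarrow> g1 \<in> Gg \<Longrightarrow> g2 \<in> Gg \<Longrightarrow> inK Gg (brk g1 g2)"
proof -
  assume N3: "3 \<le> NN" and g1: "g1 \<in> Gg" and g2: "g2 \<in> Gg"
  then consider (V) i j a where "g1 = dlt (Gen i j a)" "wf_mon NN (Gen i j a)"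
    | (H) i j a b where "g1 = dlt (Br (Gen i j a) (Gen j i b))" "wf_mon NN (Gen i j a)"
    unfolding Gg_def Vg_def Hg_def by blast
  then show ?thesis
  proof cases
    case V then show ?thesis using vS[OF N3 _ g2] by simp
  next
    case H then show ?thesis using hv[OF N3 _ g2] by simp
  qed
qed

lemma SS: "3 \<le> NN \<Longrightarrow> inK Gg X \<Longrightarrow> inK Gg Y \<Longrightarrow> inK Gg (brk X Y)"
proof -
  assume N3: "3 \<le> NN" and X: "inK Gg X" and Y: "inK Gg Y"
  have fY: "Y \<in> freeA NN" using Y unfolding inK_def by simp
  have "\<forall>g\<in>Gg. inK Gg (brk g Y)"
  proof
    fix g :: "'a mon \<Rightarrow> 'k" assume g: "g \<in> Gg"
    then have "g \<in> freeA NN" using Gg_freeA by auto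
    then show "inK Gg (brk g Y)"
      by (rule liftK_right[OF Y Gg_freeA]) (auto intro: GG[OF N3 g])
  qed
  then show ?thesis by (rule liftK_left[OF X Gg_freeA fY])
qed

lemma mon_inS: "3 \<le> NN \<Longrightarrow> wf_mon NN u \<Longrightarrow> inK Gg (dlt u)"
proof (induction u)
  case (Gen i j a)
  then show ?case by (intro inK_gen[OF Gg_freeA]) (auto simp: Gg_def Vg_def)
next
  case (Br u v)
  then show ?case using SS[OF Br.prems(1)] by (simp add: brk_dlt[symmetric])
qed

lemma fin_inS: "3 \<le> NN \<Longrightarrow> finite F \<Longrightarrow> \<forall>X. {u. X u \<noteq> 0} \<subseteq> F \<longrightarrow> (\<forall>u. X u \<noteq> 0 \<longrightarrow> wf_mon NN u) \<longrightarrow> inK Gg X"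
proof -
  assume N3: "3 \<le> NN"
  show "finite F \<Longrightarrow> ?thesis"
  proof (induction F rule: finite_induct)
    case empty
    show ?case
    proof (intro allI impI)
      fix X :: "'a mon \<Rightarrow> 'k" assume "{u. X u \<noteq> 0} \<subseteq> {}"
      then have "X = (\<lambda>_. 0)" by auto
      then show "inK Gg X" by (simp add: inK_zero)
    qed
  next
    case (insert u F)
    show ?case
    proof (intro allI impI)
      fix X :: "'a mon \<Rightarrow> 'k" assume s: "{u. X u \<noteq> 0} \<subseteq> insert u F" and w: "\<forall>u. X u \<noteq> 0 \<longrightarrow> wf_mon NN u"
      define X' where "X' = (\<lambda>w. if w = u then 0 else X w)"
      have "{w. X' w \<noteq> 0} \<subseteq> F" using s by (auto simp: X'_def)
      moreover have "\<forall>w. X' w \<noteq> 0 \<longrightarrow> wf_mon NN w" using w by (auto simp: X'_def)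
      ultimately have X': "inK Gg X'" using insert.IH by blast
      have eq: "X = (\<lambda>w. X u * dlt u w + 1 * X' w)" by (auto simp: X'_def dlt_def)
      show "inK Gg X"
      proof (cases "X u = 0")
        case True
        then have "X = X'" by (auto simp: X'_def)
        then show ?thesis using X' by simp
      next
        case False
        then have "inK Gg (dlt u)" using w mon_inS[OF N3] by blast
        from inK_lin[OF this X'] eq show ?thesis by metis
      qed
    qed
  qed
qed

lemma freeA_inS: "3 \<le> NN \<Longrightarrow> X \<in> freeA NN \<Longrightarrow> inK Gg X"
  using fin_inS[of "{u. X u \<noteq> 0}"] unfolding freeA_def by blast

lemma decomp: "s \<in> kspan Gg \<Longrightarrow> \<exists>p\<in>Pspan NN. \<exists>h\<in>Hspan NN. \<exists>q\<in>Qspan NN. s = (\<lambda>w. p w + h w + q w)"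
proof (induction rule: kspan.induct)
  case zero
  then show ?case unfolding Pspan_def Hspan_def Qspan_def by (auto intro!: bexI[of _ "\<lambda>_. 0"] kspan.zero)
next
  case (add g y c)
  from add.IH obtain p h q where pq: "p \<in> Pspan NN" "h \<in> Hspan NN" "q \<in> Qspan NN"
    and y: "y = (\<lambda>w. p w + h w + q w)" by blast
  from add.hyps(1) consider (V) i j a where "g = dlt (Gen i j a)" "wf_mon NN (Gen i j a)"
    | (H) i j a b where "g = dlt (Br (Gen i j a) (Gen j i b))" "wf_mon NN (Gen i j a)"
    unfolding Gg_def Vg_def Hg_def by blast
  then show ?case
  proof cases
    case V
    then consider "i < j" | "j < i" by force
    then show ?thesis
    proof cases
      case 1
      have "g \<in> {dlt (Gen i j a) | i j a. wf_mon NN (Gen i j a) \<and> i < j}" using V 1 by blast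
      from kspan.add[OF this pq(1)[unfolded Pspan_def]]
      have "(\<lambda>w. c * g w + p w) \<in> Pspan NN" unfolding Pspan_def .
      then show ?thesis using pq y by (intro bexI[of _ "\<lambda>w. c * g w + p w"] bexI[of _ h] bexI[of _ q]) (auto simp: algebra_simps)
    next
      case 2
      have "g \<in> {dlt (Gen i j a) | i j a. wf_mon NN (Gen i j a) \<and> i > j}" using V 2 by blast
      from kspan.add[OF this pq(3)[unfolded Qspan_def]]
      have "(\<lambda>w. c * g w + q w) \<in> Qspan NN" unfolding Qspan_def .
      then show ?thesis using pq y by (intro bexI[of _ p] bexI[of _ h] bexI[of _ "\<lambda>w. c * g w + q w"]) (auto simp: algebra_simps)
    qed
  next
    case H
    have "g \<in> {dlt (Br (Gen i j a) (Gen j i b)) | i j a b. wf_mon NN (Gen i j a)}" using H by blast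
    from kspan.add[OF this pq(2)[unfolded Hspan_def]]
    have "(\<lambda>w. c * g w + h w) \<in> Hspan NN" unfolding Hspan_def .
    then show ?thesis using pq y by (intro bexI[of _ p] bexI[of _ "\<lambda>w. c * g w + h w"] bexI[of _ q]) (auto simp: algebra_simps)
  qed
qed

theorem existence: "3 \<le> NN \<Longrightarrow> X \<in> freeA NN \<Longrightarrow> \<exists>p \<in> Pspan NN. \<exists>h \<in> Hspan NN. \<exists>q \<in> Qspan NN.
            (\<lambda>w. X w - (p w + h w + q w)) \<in> II"
proof -
  assume N3: "3 \<le> NN" and X: "X \<in> freeA NN"
  from freeA_inS[OF N3 X] obtain s where s: "s \<in> kspan Gg" "cg X s" unfolding inK_def by blast
  from decomp[OF s(1)] obtain p h q where "p \<in> Pspan NN" "h \<in> Hspan NN" "q \<in> Qspan NN"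
    "s = (\<lambda>w. p w + h w + q w)" by blast
  with s(2) show ?thesis unfolding cg_def by blast
qed

end



context stc begin

lemma kalg_facts:
  "sm c (x + y) = sm c x + sm c y" "sm (c + d) x = sm c x + sm d x"
  "sm (c * d) x = sm c (sm d x)" "sm 1 x = x"
  "sm c (x * y) = sm c x * y" "sm c (x * y) = x * sm c y"
  using kal unfolding kalg_def by blast+

lemma sm_0k[simp]: "sm 0 x = 0"
  using kalg_facts(2)[of 0 0 x] by simp
lemma sm_0a[simp]: "sm c 0 = 0"
  using kalg_facts(1)[of c 0 0] by simp
lemma sm_1[simp]: "sm 1 x = x" by (rule kalg_facts(4))
lemma sm_uminus: "sm c (- x) = - sm c x"
  using kalg_facts(1)[of c x "-x"] by (simp add: eq_neg_iff_add_eq_0 add.commute)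
lemma sm_diff: "sm c (x - y) = sm c x - sm c y"
  using kalg_facts(1)[of c x "-y"] by (simp add: sm_uminus)
lemma sm_neg1: "sm (-1) x = - x"
  using kalg_facts(2)[of 1 "-1" x] by (simp add: eq_neg_iff_add_eq_0 add.commute)
lemma sm_sum: "sm c (\<Sum>i\<in>S. f i) = (\<Sum>i\<in>S. sm c (f i))"
  by (induction S rule: infinite_finite_induct) (auto simp: kalg_facts(1))
lemma sm_sum_k: "sm (\<Sum>i\<in>S. f i) x = (\<Sum>i\<in>S. sm (f i) x)"
  by (induction S rule: infinite_finite_induct) (auto simp: kalg_facts(2))
lemma sm_mult: "sm c x * sm d y = sm (c * d) (x * y)"
  by (metis kalg_facts(3,5,6))

definition sgA :: "nat \<Rightarrow> 'a" where "sgA e = (if even e then 1 else -1)"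

lemma sgA_comm: "sgA e * x = x * sgA e" by (simp add: sgA_def)
lemma sm_sgA: "sm c (sgA e * x) = sgA e * sm c x" by (simp add: sgA_def sm_uminus)
lemma sm_sgn1: "sm (sgn1 e) x = sgA e * x"
  by (simp add: sgn1_def sgA_def sm_neg1)


definition EE :: "nat \<Rightarrow> nat \<Rightarrow> 'a \<Rightarrow> nat \<Rightarrow> nat \<Rightarrow> 'a" where
  "EE i j a = (\<lambda>x y. if x = i \<and> y = j then a else 0)"

definition sbr :: "(nat \<Rightarrow> nat \<Rightarrow> 'a) \<Rightarrow> (nat \<Rightarrow> nat \<Rightarrow> 'a) \<Rightarrow> nat \<Rightarrow> nat \<Rightarrow> 'a" where
  "sbr X Y = (\<lambda>x y. \<Sum>z\<in>{1..NN}. (X x z * Y z y - sgA (tau m x z * tau m z y) * (Y x z * X z y)))"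

definition mm :: "(nat \<Rightarrow> nat \<Rightarrow> 'a) \<Rightarrow> (nat \<Rightarrow> nat \<Rightarrow> 'a) \<Rightarrow> nat \<Rightarrow> nat \<Rightarrow> 'a" where
  "mm X Y = (\<lambda>x y. \<Sum>z\<in>{1..NN}. X x z * Y z y)"

primrec phi :: "'a mon \<Rightarrow> nat \<Rightarrow> nat \<Rightarrow> 'a" where
  "phi (Gen i j a) = EE i j a"
| "phi (Br u v) = sbr (phi u) (phi v)"

definition hom :: "(nat \<Rightarrow> nat \<Rightarrow> 'a) \<Rightarrow> nat \<Rightarrow> bool" where
  "hom X d \<longleftrightarrow> (\<forall>x y. X x y \<noteq> 0 \<longrightarrow> tau m x y = d)"

lemma tau_add: "tau m x y = (tau m x z + tau m z y) mod 2"
  unfolding tau_def by auto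

lemma tau_lt: "tau m x y < 2" unfolding tau_def by auto
lemma deg_lt: "deg m u < 2" by (induction u) (auto simp: tau_lt)

lemma sum_nz: "(\<Sum>z\<in>S. f z) \<noteq> (0::'a) \<Longrightarrow> \<exists>z\<in>S. f z \<noteq> 0"
proof (rule ccontr)
  assume a: "(\<Sum>z\<in>S. f z) \<noteq> 0" and "\<not> (\<exists>z\<in>S. f z \<noteq> 0)"
  then have "\<forall>z\<in>S. f z = 0" by blast
  then have "(\<Sum>z\<in>S. f z) = 0" by (rule sum.neutral)
  with a show False by simp
qed

lemma hom_sbr: "hom X dx \<Longrightarrow> hom Y dy \<Longrightarrow> hom (sbr X Y) ((dx + dy) mod 2)"
  unfolding hom_def
proof (intro allI impI)
  fix x y
  assume hX: "\<forall>x y. X x y \<noteq> 0 \<longrightarrow> tau m x y = dx" and hY: "\<forall>x y. Y x y \<noteq> 0 \<longrightarrow> tau m x y = dy"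
    and nz: "sbr X Y x y \<noteq> 0"
  then obtain z where "X x z * Y z y - sgA (tau m x z * tau m z y) * (Y x z * X z y) \<noteq> 0"
    unfolding sbr_def using sum_nz by blast
  then have "(X x z \<noteq> 0 \<and> Y z y \<noteq> 0) \<or> (Y x z \<noteq> 0 \<and> X z y \<noteq> 0)" by auto
  moreover have ta: "tau m x y = (tau m x z + tau m z y) mod 2" by (rule tau_add)
  ultimately show "tau m x y = (dx + dy) mod 2"
  proof (elim disjE conjE)
    assume "X x z \<noteq> 0" "Y z y \<noteq> 0"
    then have "tau m x z = dx" "tau m z y = dy" using hX hY by blast+
    then show ?thesis using ta by simp
  next
    assume "Y x z \<noteq> 0" "X z y \<noteq> 0"
    then have "tau m x z = dy" "tau m z y = dx" using hX hY by blast+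
    then show ?thesis using ta by (simp add: add.commute)
  qed
qed

lemma hom_phi: "hom (phi u) (deg m u)"
proof (induction u)
  case (Gen i j a) then show ?case by (auto simp: hom_def EE_def)
next
  case (Br u v) then show ?case by (simp add: hom_sbr)
qed

lemma sbr_hom: "hom X dx \<Longrightarrow> hom Y dy \<Longrightarrow> sbr X Y = (\<lambda>x y. mm X Y x y - sgA (dy * dx) * mm Y X x y)"
proof (intro ext)
  fix x y
  assume hX: "hom X dx" and hY: "hom Y dy"
  have "\<And>z. sgA (tau m x z * tau m z y) * (Y x z * X z y) = sgA (dy * dx) * (Y x z * X z y)"
  proof -
    fix z
    show "sgA (tau m x z * tau m z y) * (Y x z * X z y) = sgA (dy * dx) * (Y x z * X z y)"
    proof (cases "Y x z = 0 \<or> X z y = 0")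
      case True then show ?thesis by auto
    next
      case False then show ?thesis using hX hY unfolding hom_def by auto
    qed
  qed
  then show "sbr X Y x y = mm X Y x y - sgA (dy * dx) * mm Y X x y"
    unfolding sbr_def mm_def by (simp add: sum_subtractf sum_distrib_left)
qed

lemma mm_assoc: "mm (mm X Y) Z = mm X (mm Y Z)"
proof (intro ext)
  fix x y
  have "mm (mm X Y) Z x y = (\<Sum>z\<in>{1..NN}. \<Sum>n\<in>{1..NN}. X x n * Y n z * Z z y)"
    by (simp add: mm_def sum_distrib_right)
  also have "\<dots> = (\<Sum>n\<in>{1..NN}. \<Sum>z\<in>{1..NN}. X x n * Y n z * Z z y)" by (rule sum.swap)
  also have "\<dots> = mm X (mm Y Z) x y" by (simp add: mm_def sum_distrib_left mult.assoc)
  finally show "mm (mm X Y) Z x y = mm X (mm Y Z) x y" .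
qed

lemma mm_diff_left: "mm (\<lambda>x y. A x y - sgA e * B x y) Z = (\<lambda>x y. mm A Z x y - sgA e * mm B Z x y)"
proof (intro ext)
  fix x y
  have eq: "\<And>z. (A x z - sgA e * B x z) * Z z y = A x z * Z z y - sgA e * (B x z * Z z y)"
    by (simp add: left_diff_distrib mult.assoc)
  show "mm (\<lambda>x y. A x y - sgA e * B x y) Z x y = mm A Z x y - sgA e * mm B Z x y"
    unfolding mm_def by (simp only: eq sum_subtractf sum_distrib_left)
qed

lemma mm_diff_right: "mm Z (\<lambda>x y. A x y - sgA e * B x y) = (\<lambda>x y. mm Z A x y - sgA e * mm Z B x y)"
proof (intro ext)
  fix x y
  have eq: "\<And>z. Z x z * (A z y - sgA e * B z y) = Z x z * A z y - sgA e * (Z x z * B z y)"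
  proof -
    fix z
    have "Z x z * (sgA e * B z y) = sgA e * (Z x z * B z y)" by (metis mult.assoc sgA_comm)
    then show "Z x z * (A z y - sgA e * B z y) = Z x z * A z y - sgA e * (Z x z * B z y)"
      by (simp add: right_diff_distrib)
  qed
  show "mm Z (\<lambda>x y. A x y - sgA e * B x y) x y = mm Z A x y - sgA e * mm Z B x y"
    unfolding mm_def by (simp only: eq sum_subtractf sum_distrib_left)
qed

lemma ring_sg: "dx < 2 \<Longrightarrow> dy < 2 \<Longrightarrow> dz < 2 \<Longrightarrow>
     (a - sgA (dy * dx) * b) - sgA (dz * ((dx + dy) mod 2)) * (c - sgA (dy * dx) * d)
   = ((a - sgA (dz * dy) * e) - sgA (((dy + dz) mod 2) * dx) * (f - sgA (dz * dy) * d))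
     - sgA (dx * dy) * ((b - sgA (dz * dx) * f) - sgA (((dx + dz) mod 2) * dy) * (e - sgA (dz * dx) * (c::'a)))"
proof -
  assume lt: "dx < 2" "dy < 2" "dz < 2"
  have "dx = 0 \<or> dx = 1" "dy = 0 \<or> dy = 1" "dz = 0 \<or> dz = 1" using lt by auto
  then show ?thesis
    by (elim disjE) (simp_all add: sgA_def algebra_simps)
qed

lemma leib: "hom X dx \<Longrightarrow> hom Y dy \<Longrightarrow> hom Z dz \<Longrightarrow> dx < 2 \<Longrightarrow> dy < 2 \<Longrightarrow> dz < 2 \<Longrightarrow>
  sbr (sbr X Y) Z x y = sbr X (sbr Y Z) x y - sgA (dx * dy) * sbr Y (sbr X Z) x y"
proof -
  assume hX: "hom X dx" and hY: "hom Y dy" and hZ: "hom Z dz" and lt: "dx < 2" "dy < 2" "dz < 2"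
  have XY: "sbr X Y = (\<lambda>x y. mm X Y x y - sgA (dy * dx) * mm Y X x y)" by (rule sbr_hom[OF hX hY])
  have YZ: "sbr Y Z = (\<lambda>x y. mm Y Z x y - sgA (dz * dy) * mm Z Y x y)" by (rule sbr_hom[OF hY hZ])
  have XZ: "sbr X Z = (\<lambda>x y. mm X Z x y - sgA (dz * dx) * mm Z X x y)" by (rule sbr_hom[OF hX hZ])
  have XYZ: "sbr (sbr X Y) Z = (\<lambda>x y. mm (sbr X Y) Z x y - sgA (dz * ((dx + dy) mod 2)) * mm Z (sbr X Y) x y)"
    by (rule sbr_hom[OF hom_sbr[OF hX hY] hZ])
  have XYZ2: "sbr X (sbr Y Z) = (\<lambda>x y. mm X (sbr Y Z) x y - sgA (((dy + dz) mod 2) * dx) * mm (sbr Y Z) X x y)"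
    by (rule sbr_hom[OF hX hom_sbr[OF hY hZ]])
  have XYZ3: "sbr Y (sbr X Z) = (\<lambda>x y. mm Y (sbr X Z) x y - sgA (((dx + dz) mod 2) * dy) * mm (sbr X Z) Y x y)"
    by (rule sbr_hom[OF hY hom_sbr[OF hX hZ]])
  have L: "sbr (sbr X Y) Z x y = (mm X (mm Y Z) x y - sgA (dy * dx) * mm Y (mm X Z) x y)
      - sgA (dz * ((dx + dy) mod 2)) * (mm Z (mm X Y) x y - sgA (dy * dx) * mm Z (mm Y X) x y)"
    unfolding XYZ unfolding XY mm_diff_left mm_diff_right mm_assoc ..
  have R1: "sbr X (sbr Y Z) x y = (mm X (mm Y Z) x y - sgA (dz * dy) * mm X (mm Z Y) x y)
      - sgA (((dy + dz) mod 2) * dx) * (mm Y (mm Z X) x y - sgA (dz * dy) * mm Z (mm Y X) x y)"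
    unfolding XYZ2 unfolding YZ mm_diff_left mm_diff_right mm_assoc ..
  have R2: "sbr Y (sbr X Z) x y = (mm Y (mm X Z) x y - sgA (dz * dx) * mm Y (mm Z X) x y)
      - sgA (((dx + dz) mod 2) * dy) * (mm X (mm Z Y) x y - sgA (dz * dx) * mm Z (mm X Y) x y)"
    unfolding XYZ3 unfolding XZ mm_diff_left mm_diff_right mm_assoc ..
  show ?thesis unfolding L R1 R2 by (rule ring_sg[OF lt])
qed


lemma sbr_EE: "sbr (EE i j a) (EE k l b) x y =
   (if j \<in> {1..NN} then (if x = i \<and> j = k \<and> y = l then a * b else 0) else 0)
 - (if l \<in> {1..NN} then (if x = k \<and> l = i \<and> y = j then sgA (tau m k i * tau m i j) * (b * a) else 0) else 0)"
proof -
  have e1: "\<And>z. EE i j a x z * EE k l b z y = (if z = j then (if x = i \<and> j = k \<and> y = l then a * b else 0) else 0)"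
    by (simp add: EE_def)
  have e2: "\<And>z. sgA (tau m x z * tau m z y) * (EE k l b x z * EE i j a z y)
      = (if z = l then (if x = k \<and> l = i \<and> y = j then sgA (tau m k i * tau m i j) * (b * a) else 0) else 0)"
    by (cases "z = l"; cases "x = k \<and> l = i \<and> y = j") (auto simp: EE_def)
  show ?thesis unfolding sbr_def
    by (simp only: e1 e2 sum_subtractf sum.delta finite_atLeastAtMost)
qed

definition Phi :: "('a mon \<Rightarrow> 'k) \<Rightarrow> nat \<Rightarrow> nat \<Rightarrow> 'a" where
  "Phi f = (\<lambda>x y. \<Sum>u\<in>{u. f u \<noteq> 0}. sm (f u) (phi u x y))"

lemma Phi_sup: "finite S \<Longrightarrow> {u. f u \<noteq> 0} \<subseteq> S \<Longrightarrow> Phi f x y = (\<Sum>u\<in>S. sm (f u) (phi u x y))"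
  unfolding Phi_def by (rule sum.mono_neutral_left) auto

lemma Phi_lin: "finite {u. f u \<noteq> 0} \<Longrightarrow> finite {u. g u \<noteq> 0} \<Longrightarrow>
  Phi (\<lambda>w. c * f w + d * g w) x y = sm c (Phi f x y) + sm d (Phi g x y)"
proof -
  assume ff: "finite {u. f u \<noteq> 0}" and fg: "finite {u. g u \<noteq> 0}"
  let ?S = "{u. f u \<noteq> 0} \<union> {u. g u \<noteq> 0}"
  have fS: "finite ?S" using ff fg by simp
  have "Phi (\<lambda>w. c * f w + d * g w) x y = (\<Sum>u\<in>?S. sm (c * f u + d * g u) (phi u x y))"
    by (rule Phi_sup[OF fS]) auto
  also have "\<dots> = (\<Sum>u\<in>?S. sm c (sm (f u) (phi u x y)) + sm d (sm (g u) (phi u x y)))"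
    by (simp add: kalg_facts(2,3))
  also have "\<dots> = sm c (\<Sum>u\<in>?S. sm (f u) (phi u x y)) + sm d (\<Sum>u\<in>?S. sm (g u) (phi u x y))"
    by (simp add: sum.distrib sm_sum)
  also have "\<dots> = sm c (Phi f x y) + sm d (Phi g x y)"
    using Phi_sup[OF fS, of f] Phi_sup[OF fS, of g] by auto
  finally show ?thesis .
qed

lemma Phi_zero: "Phi (\<lambda>_. 0) x y = 0" unfolding Phi_def by simp

lemma Phi_dlt: "Phi (dlt u) x y = phi u x y"
  using Phi_sup[of "{u}" "dlt u" x y] by (auto simp: dlt_def)

lemma fs_lin: "finite {u. f u \<noteq> 0} \<Longrightarrow> finite {u. g u \<noteq> (0::'k)} \<Longrightarrow> finite {u. c * f u + d * g u \<noteq> 0}"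
  by (rule finite_subset[of _ "{u. f u \<noteq> 0} \<union> {u. g u \<noteq> 0}"]) auto

lemma fs_dlt: "finite {w. dlt u w \<noteq> (0::'k)}"
  by (rule finite_subset[of _ "{u}"]) (auto simp: dlt_def)

lemma Phi3: "Phi (\<lambda>w. c1 * dlt A w + c2 * dlt B w + c3 * dlt C w) x y
   = sm c1 (phi A x y) + sm c2 (phi B x y) + sm c3 (phi C x y)"
proof -
  have "Phi (\<lambda>w. c1 * dlt A w + c2 * dlt B w + c3 * dlt C w) x y
      = Phi (\<lambda>w. 1 * (\<lambda>w. c1 * dlt A w + c2 * dlt B w) w + c3 * dlt C w) x y"
    by simp
  also have "\<dots> = sm 1 (Phi (\<lambda>w. c1 * dlt A w + c2 * dlt B w) x y) + sm c3 (Phi (dlt C) x y)"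
    by (rule Phi_lin[OF fs_lin[OF fs_dlt fs_dlt] fs_dlt])
  also have "\<dots> = sm c1 (phi A x y) + sm c2 (phi B x y) + sm c3 (phi C x y)"
    using Phi_lin[OF fs_dlt fs_dlt, of c1 A c2 B x y] by (simp add: Phi_dlt)
  finally show ?thesis .
qed


lemma Phi_brk: "finite {u. f u \<noteq> 0} \<Longrightarrow> finite {u. g u \<noteq> 0} \<Longrightarrow>
  Phi (brk f g) x y = sbr (Phi f) (Phi g) x y"
proof -
  assume ff: "finite {u. f u \<noteq> 0}" and fg: "finite {u. g u \<noteq> 0}"
  define F where "F = {u. f u \<noteq> 0}"
  define G where "G = {u. g u \<noteq> 0}"
  have fF: "finite F" "finite G" using ff fg by (auto simp: F_def G_def)
  let ?h = "\<lambda>(u, v). Br u v"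
  have inj: "inj_on ?h (F \<times> G)" by (auto simp: inj_on_def)
  have sub: "{w. brk f g w \<noteq> 0} \<subseteq> ?h ` (F \<times> G)"
    by (auto simp: F_def G_def dest!: brk_supp)
  let ?P = "\<lambda>u v z. sm (f u) (phi u x z) * sm (g v) (phi v z y)"
  let ?Q = "\<lambda>u v z. sm (g v) (phi v x z) * sm (f u) (phi u z y)"
  let ?s = "\<lambda>z. sgA (tau m x z * tau m z y)"
  have tmx: "\<And>u v. sm (f u * g v) (sbr (phi u) (phi v) x y) = (\<Sum>z\<in>{1..NN}. ?P u v z - ?s z * ?Q u v z)"
    by (simp add: sbr_def sm_sum sm_diff sm_sgA sm_mult mult.commute)
  have "Phi (brk f g) x y = (\<Sum>w\<in>?h ` (F \<times> G). sm (brk f g w) (phi w x y))"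
    by (rule Phi_sup[OF _ sub]) (use fF in simp)
  also have "\<dots> = (\<Sum>p\<in>F \<times> G. sm (f (fst p) * g (snd p)) (sbr (phi (fst p)) (phi (snd p)) x y))"
    by (subst sum.reindex[OF inj]) (simp add: case_prod_unfold)
  also have "\<dots> = (\<Sum>u\<in>F. \<Sum>v\<in>G. sm (f u * g v) (sbr (phi u) (phi v) x y))"
    by (simp add: sum.cartesian_product case_prod_unfold)
  also have "\<dots> = (\<Sum>u\<in>F. \<Sum>v\<in>G. \<Sum>z\<in>{1..NN}. ?P u v z - ?s z * ?Q u v z)"
    by (simp only: tmx)
  also have "\<dots> = (\<Sum>z\<in>{1..NN}. \<Sum>u\<in>F. \<Sum>v\<in>G. ?P u v z - ?s z * ?Q u v z)"
  proof -
    have "(\<Sum>u\<in>F. \<Sum>v\<in>G. \<Sum>z\<in>{1..NN}. ?P u v z - ?s z * ?Q u v z)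
        = (\<Sum>u\<in>F. \<Sum>z\<in>{1..NN}. \<Sum>v\<in>G. ?P u v z - ?s z * ?Q u v z)"
      by (rule sum.cong[OF refl], rule sum.swap)
    also have "\<dots> = (\<Sum>z\<in>{1..NN}. \<Sum>u\<in>F. \<Sum>v\<in>G. ?P u v z - ?s z * ?Q u v z)"
      by (rule sum.swap)
    finally show ?thesis .
  qed
  also have "\<dots> = (\<Sum>z\<in>{1..NN}. (\<Sum>u\<in>F. \<Sum>v\<in>G. ?P u v z) - ?s z * (\<Sum>u\<in>F. \<Sum>v\<in>G. ?Q u v z))"
    by (simp only: sum_subtractf sum_distrib_left)
  also have "\<dots> = (\<Sum>z\<in>{1..NN}. (\<Sum>u\<in>F. \<Sum>v\<in>G. ?P u v z) - ?s z * (\<Sum>v\<in>G. \<Sum>u\<in>F. ?Q u v z))"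
    by (simp only: sum.swap[of _ F G])
  also have "\<dots> = sbr (Phi f) (Phi g) x y"
    unfolding sbr_def Phi_def F_def[symmetric] G_def[symmetric]
    by (simp only: sum_product)
  finally show ?thesis .
qed


lemma sm_negk: "sm (- c) x = - sm c x"
  using kalg_facts(3)[of "-1" c x] by (simp add: sm_neg1)

lemma fs_I: "x \<in> II \<Longrightarrow> finite {u. x u \<noteq> 0}"
  using I_freeA freeA_D by blast

lemma rels_Phi: "x \<in> stl_rels m n sm \<Longrightarrow> Phi x a0 b0 = 0"
  unfolding stl_rels_def
proof (elim UnE CollectE exE conjE)
  fix i j a b
  assume x: "x = (\<lambda>w. dlt (Gen i j (a + b)) w - dlt (Gen i j a) w - dlt (Gen i j b) w)"
  have "Phi x a0 b0 = sm 1 (phi (Gen i j (a + b)) a0 b0) + sm (-1) (phi (Gen i j a) a0 b0) + sm (-1) (phi (Gen i j b) a0 b0)"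
    using Phi3[of 1 "Gen i j (a + b)" "-1" "Gen i j a" "-1" "Gen i j b" a0 b0] unfolding x by simp
  then show "Phi x a0 b0 = 0" by (simp add: Phi3 sm_neg1 EE_def)
next
  fix i j a c
  assume x: "x = (\<lambda>w. dlt (Gen i j (sm c a)) w - c * dlt (Gen i j a) w)"
  have "Phi x a0 b0 = sm 1 (phi (Gen i j (sm c a)) a0 b0) + sm (- c) (phi (Gen i j a) a0 b0) + sm 0 (phi (Gen i j a) a0 b0)"
    using Phi3[of 1 "Gen i j (sm c a)" "- c" "Gen i j a" 0 "Gen i j a" a0 b0] unfolding x by simp
  then show "Phi x a0 b0 = 0" by (simp add: Phi3 sm_negk EE_def)
next
  fix i j k l a b
  assume x: "x = dlt (Br (Gen i j a) (Gen k l b))" and h: "wf_mon NN (Gen i j a)" "wf_mon NN (Gen k l b)" "i \<noteq> l" "j \<noteq> k"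
  then show "Phi x a0 b0 = 0" by (simp add: Phi_dlt sbr_EE)
next
  fix i j k l a b
  assume x: "x = (\<lambda>w. dlt (Br (Gen i j a) (Gen k l b)) w - dlt (Gen i l (a * b)) w)"
    and h: "wf_mon NN (Gen i j a)" "wf_mon NN (Gen k l b)" "i \<noteq> l" "j = k"
  have "Phi x a0 b0 = sm 1 (phi (Br (Gen i j a) (Gen k l b)) a0 b0) + sm (-1) (phi (Gen i l (a * b)) a0 b0) + sm 0 (phi (Gen i l (a * b)) a0 b0)"
    using Phi3[of 1 "Br (Gen i j a) (Gen k l b)" "-1" "Gen i l (a * b)" 0 "Gen i l (a * b)" a0 b0] unfolding x by simp
  then show "Phi x a0 b0 = 0" using h by (simp add: sm_neg1 sbr_EE) (simp add: EE_def)
next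
  fix i j k l a b
  assume x: "x = (\<lambda>w. dlt (Br (Gen i j a) (Gen k l b)) w + sgn1 (tau m i j * tau m k l) * dlt (Gen k j (b * a)) w)"
    and h: "wf_mon NN (Gen i j a)" "wf_mon NN (Gen k l b)" "i = l" "j \<noteq> k"
  have "Phi x a0 b0 = sm 1 (phi (Br (Gen i j a) (Gen k l b)) a0 b0) + sm (sgn1 (tau m i j * tau m k l)) (phi (Gen k j (b * a)) a0 b0) + sm 0 (phi (Gen k j (b * a)) a0 b0)"
    using Phi3[of 1 "Br (Gen i j a) (Gen k l b)" "sgn1 (tau m i j * tau m k l)" "Gen k j (b * a)" 0 "Gen k j (b * a)" a0 b0] unfolding x by simp
  then show "Phi x a0 b0 = 0" using h by (simp add: sm_sgn1 sbr_EE) (simp add: EE_def mult.commute)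
next
  fix u v z
  assume x: "x = (\<lambda>w. dlt (Br (Br u v) z) w - dlt (Br u (Br v z)) w + sgn1 (deg m u * deg m v) * dlt (Br v (Br u z)) w)"
  have "Phi x a0 b0 = sm 1 (phi (Br (Br u v) z) a0 b0) + sm (-1) (phi (Br u (Br v z)) a0 b0) + sm (sgn1 (deg m u * deg m v)) (phi (Br v (Br u z)) a0 b0)"
    using Phi3[of 1 "Br (Br u v) z" "-1" "Br u (Br v z)" "sgn1 (deg m u * deg m v)" "Br v (Br u z)" a0 b0] unfolding x by simp
  moreover have "sbr (sbr (phi u) (phi v)) (phi z) a0 b0 = sbr (phi u) (sbr (phi v) (phi z)) a0 b0
      - sgA (deg m u * deg m v) * sbr (phi v) (sbr (phi u) (phi z)) a0 b0"
    by (rule leib[OF hom_phi hom_phi hom_phi deg_lt deg_lt deg_lt])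
  ultimately show "Phi x a0 b0 = 0" by (simp add: Phi3 sm_neg1 sm_sgn1)
qed

lemma sbr_zero_left: "sbr (\<lambda>_ _. 0) Y x y = 0" unfolding sbr_def by simp
lemma sbr_zero_right: "sbr Y (\<lambda>_ _. 0) x y = 0" unfolding sbr_def by simp

lemma Phi_I: "x \<in> II \<Longrightarrow> Phi x = (\<lambda>_ _. 0)"
proof (induction rule: stl_ideal.induct)
  case (rel x) then show ?case using rels_Phi by blast
next
  case zero then show ?case by (simp add: Phi_zero fun_eq_iff)
next
  case (add x y c)
  have "\<And>a b. Phi (\<lambda>w. c * x w + 1 * y w) a b = sm c (Phi x a b) + sm 1 (Phi y a b)"
    by (rule Phi_lin[OF fs_I[OF add.hyps(1)] fs_I[OF add.hyps(2)]])
  then show ?case using add.IH by (simp add: fun_eq_iff)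
next
  case (brl x y)
  have "\<And>a b. Phi (brk x y) a b = sbr (Phi x) (Phi y) a b"
    by (rule Phi_brk[OF fs_I[OF brl.hyps(1)]]) (use brl.hyps(2) freeA_D in blast)
  then show ?case using brl.IH by (simp add: fun_eq_iff sbr_zero_left)
next
  case (brr x y)
  have "\<And>a b. Phi (brk y x) a b = sbr (Phi y) (Phi x) a b"
    by (rule Phi_brk[OF _ fs_I[OF brr.hyps(1)]]) (use brr.hyps(2) freeA_D in blast)
  then show ?case using brr.IH by (simp add: fun_eq_iff sbr_zero_right)
qed


lemma fs_kspan: "x \<in> kspan S \<Longrightarrow> (\<forall>g\<in>S. finite {u. g u \<noteq> 0}) \<Longrightarrow> finite {u. x u \<noteq> (0::'k)}"
proof (induction rule: kspan.induct)
  case zero then show ?case by simp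
next
  case (add x y c)
  then show ?case using fs_lin[of x y c 1] by simp
qed

lemma kspan_Phi: "x \<in> kspan S \<Longrightarrow> (\<forall>g\<in>S. finite {u. g u \<noteq> 0} \<and> (\<forall>a b. Phi g a b \<noteq> 0 \<longrightarrow> R a b))
   \<Longrightarrow> Phi x a b \<noteq> 0 \<Longrightarrow> R a b"
proof (induction arbitrary: a b rule: kspan.induct)
  case zero then show ?case by (simp add: Phi_zero)
next
  case (add g y c)
  have fg: "finite {u. g u \<noteq> 0}" using add by blast
  have fy: "finite {u. y u \<noteq> 0}" by (rule fs_kspan[OF add.hyps(2)]) (use add.prems in blast)
  have "Phi (\<lambda>w. c * g w + 1 * y w) a b = sm c (Phi g a b) + sm 1 (Phi y a b)"
    by (rule Phi_lin[OF fg fy])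
  then have "Phi g a b \<noteq> 0 \<or> Phi y a b \<noteq> 0" using add.prems(2) by auto
  then show ?case using add by blast
qed

definition "PG R = {dlt (Gen i j a) | i j a. wf_mon NN (Gen i j a) \<and> R i j}"
definition "UU R = {(i, j). 1 \<le> i \<and> i \<le> NN \<and> 1 \<le> j \<and> j \<le> NN \<and> i \<noteq> j \<and> R i j}"

lemma UU_fin: "finite (UU R)"
  by (rule finite_subset[of _ "{1..NN} \<times> {1..NN}"]) (auto simp: UU_def)

lemma Pspan_PG: "Pspan NN = kspan (PG (\<lambda>i j. i < j))" unfolding Pspan_def PG_def by simp
lemma Qspan_PG: "Qspan NN = kspan (PG (\<lambda>i j. i > j))" unfolding Qspan_def PG_def by simp

lemma PG_Phi: "g \<in> PG R \<Longrightarrow> finite {u. g u \<noteq> 0} \<and> (\<forall>a b. Phi g a b \<noteq> 0 \<longrightarrow> R a b)"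
  unfolding PG_def by (auto simp: fs_dlt Phi_dlt EE_def split: if_splits)

lemma Hg_Phi: "g \<in> {dlt (Br (Gen i j a) (Gen j i b)) | i j a b. wf_mon NN (Gen i j a)} \<Longrightarrow>
   finite {u. g u \<noteq> 0} \<and> (\<forall>x y. Phi g x y \<noteq> 0 \<longrightarrow> x = y)"
proof -
  assume "g \<in> {dlt (Br (Gen i j a) (Gen j i b)) | i j a b. wf_mon NN (Gen i j a)}"
  then obtain i j a b where g: "g = dlt (Br (Gen i j a) (Gen j i b))" by blast
  show ?thesis
  proof
    show "finite {u. g u \<noteq> 0}" unfolding g by (rule fs_dlt)
    show "\<forall>x y. Phi g x y \<noteq> 0 \<longrightarrow> x = y"
    proof (intro allI impI)
      fix x y assume "Phi g x y \<noteq> 0"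
      then have "sbr (EE i j a) (EE j i b) x y \<noteq> 0" by (simp add: g Phi_dlt)
      then show "x = y" unfolding sbr_EE by (auto split: if_splits)
    qed
  qed
qed

lemma dlt0_I: "wf_mon NN (Gen i j (a::'a)) \<Longrightarrow> dlt (Gen i j 0) \<in> II"
proof -
  assume h: "wf_mon NN (Gen i j (a::'a))"
  from R1s[OF h, of 0] have "cg (dlt (Gen i j 0)) (\<lambda>_. 0)" by simp
  then show ?thesis by (rule cg_I')
qed

lemma cg_sum: "finite U \<Longrightarrow> (\<forall>k\<in>U. cg (f k) (g k)) \<Longrightarrow> cg (\<lambda>w. \<Sum>k\<in>U. f k w) (\<lambda>w. \<Sum>k\<in>U. g k w)"
proof (induction U rule: finite_induct)
  case empty then show ?case by (simp add: cg_refl)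
next
  case (insert k U)
  then have "cg (\<lambda>w. 1 * f k w + 1 * (\<Sum>k\<in>U. f k w)) (\<lambda>w. 1 * g k w + 1 * (\<Sum>k\<in>U. g k w))"
    by (intro cg_lin) auto
  then show ?case using insert.hyps by simp
qed

lemma sum0_I: "(\<forall>k\<in>UU R. True) \<Longrightarrow> cg (\<lambda>w. \<Sum>ij\<in>UU R. dlt (Gen (fst ij) (snd ij) 0) w) (\<lambda>_. 0)"
proof -
  have "cg (\<lambda>w. \<Sum>ij\<in>UU R. dlt (Gen (fst ij) (snd ij) 0) w) (\<lambda>w. \<Sum>ij\<in>UU R. (\<lambda>_. 0) w)"
  proof (rule cg_sum[OF UU_fin], rule ballI)
    fix ij assume "ij \<in> UU R"
    then have "wf_mon NN (Gen (fst ij) (snd ij) (0::'a))" by (auto simp: UU_def)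
    then show "cg (dlt (Gen (fst ij) (snd ij) 0)) (\<lambda>_. 0)" by (rule cg_I[OF dlt0_I])
  qed
  then show ?thesis by simp
qed


lemma recon: "p \<in> kspan (PG R) \<Longrightarrow>
  cg p (\<lambda>w. \<Sum>ij\<in>UU R. dlt (Gen (fst ij) (snd ij) (Phi p (fst ij) (snd ij))) w)"
proof (induction rule: kspan.induct)
  case zero
  show ?case using cg_sym[OF sum0_I[of R]] by (simp add: Phi_zero)
next
  case (add g y c)
  from add.hyps(1) obtain i0 j0 a0 where g: "g = dlt (Gen i0 j0 a0)" and w0: "wf_mon NN (Gen i0 j0 a0)"
    and r0: "R i0 j0" unfolding PG_def by blast
  have u0: "(i0, j0) \<in> UU R" using w0 r0 by (auto simp: UU_def)
  have fg: "finite {u. g u \<noteq> 0}" unfolding g by (rule fs_dlt)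
  have fy: "finite {u. y u \<noteq> 0}" by (rule fs_kspan[OF add.hyps(2)]) (use PG_Phi in blast)
  have PhiE: "\<And>a b. Phi (\<lambda>w. c * g w + y w) a b = sm c (EE i0 j0 a0 a b) + Phi y a b"
    using Phi_lin[OF fg fy, of c 1] by (simp add: g Phi_dlt)
  define E where "E = (\<lambda>ij. EE i0 j0 a0 (fst ij) (snd ij))"
  define Py where "Py = (\<lambda>ij. Phi y (fst ij) (snd ij))"
  define F where "F = (\<lambda>ij (a::'a). Gen (fst ij) (snd ij) a)"
  have wfF: "\<And>ij a. ij \<in> UU R \<Longrightarrow> wf_mon NN (F ij a)" by (auto simp: UU_def F_def)
  have wfG: "\<And>ij (a::'a). ij \<in> UU R \<Longrightarrow> wf_mon NN (Gen (fst ij) (snd ij) a)" by (auto simp: UU_def)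
  have A: "cg (\<lambda>w. \<Sum>ij\<in>UU R. dlt (F ij (sm c (E ij) + Py ij)) w)
              (\<lambda>w. \<Sum>ij\<in>UU R. (c * dlt (F ij (E ij)) w + 1 * dlt (F ij (Py ij)) w))"
  proof (rule cg_sum[OF UU_fin], rule ballI)
    fix ij assume ij: "ij \<in> UU R"
    have c1: "cg (dlt (F ij (sm c (E ij) + Py ij))) (\<lambda>w. dlt (F ij (sm c (E ij))) w + dlt (F ij (Py ij)) w)"
      using R1[OF wfG[OF ij, of "sm c (E ij)"], of "Py ij"] by (simp add: F_def)
    have c2: "cg (dlt (F ij (sm c (E ij)))) (\<lambda>w. c * dlt (F ij (E ij)) w)"
      using R1s[OF wfG[OF ij, of "E ij"], of c] by (simp add: F_def)
    have "cg (\<lambda>w. 1 * dlt (F ij (sm c (E ij))) w + 1 * dlt (F ij (Py ij)) w)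
             (\<lambda>w. 1 * (c * dlt (F ij (E ij)) w) + 1 * dlt (F ij (Py ij)) w)"
      by (rule cg_lin[OF c2 cg_refl])
    then show "cg (dlt (F ij (sm c (E ij) + Py ij))) (\<lambda>w. c * dlt (F ij (E ij)) w + 1 * dlt (F ij (Py ij)) w)"
      using cg_trans[OF c1] by simp
  qed
  have B: "(\<lambda>w. \<Sum>ij\<in>UU R. (c * dlt (F ij (E ij)) w + 1 * dlt (F ij (Py ij)) w))
         = (\<lambda>w. c * (\<Sum>ij\<in>UU R. dlt (F ij (E ij)) w) + 1 * (\<Sum>ij\<in>UU R. dlt (F ij (Py ij)) w))"
    by (simp add: sum.distrib sum_distrib_left)
  have C: "cg (\<lambda>w. \<Sum>ij\<in>UU R. dlt (F ij (E ij)) w) g"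
  proof -
    have split: "\<And>w. (\<Sum>ij\<in>UU R. dlt (F ij (E ij)) w)
        = dlt (F (i0, j0) (E (i0, j0))) w + (\<Sum>ij\<in>UU R - {(i0, j0)}. dlt (F ij (E ij)) w)"
      by (rule sum.remove[OF UU_fin u0])
    have rest: "cg (\<lambda>w. \<Sum>ij\<in>UU R - {(i0, j0)}. dlt (F ij (E ij)) w) (\<lambda>w. \<Sum>ij\<in>UU R - {(i0, j0)}. (\<lambda>_. 0) w)"
    proof (rule cg_sum, simp add: UU_fin, rule ballI)
      fix ij assume ij: "ij \<in> UU R - {(i0, j0)}"
      then have "E ij = 0" by (cases ij) (auto simp: E_def EE_def)
      moreover have "wf_mon NN (F ij (0::'a))" using wfF ij by blast
      ultimately show "cg (dlt (F ij (E ij))) (\<lambda>_. 0)"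
        by (simp add: F_def cg_I dlt0_I)
    qed
    have X: "cg (\<lambda>w. 1 * dlt (F (i0, j0) (E (i0, j0))) w + 1 * (\<Sum>ij\<in>UU R - {(i0, j0)}. dlt (F ij (E ij)) w))
             (\<lambda>w. 1 * dlt (F (i0, j0) (E (i0, j0))) w + 1 * (\<Sum>ij\<in>UU R - {(i0, j0)}. (\<lambda>_. 0) w))"
      by (rule cg_lin[OF cg_refl rest])
    have eqL: "(\<lambda>w. \<Sum>ij\<in>UU R. dlt (F ij (E ij)) w)
       = (\<lambda>w. 1 * dlt (F (i0, j0) (E (i0, j0))) w + 1 * (\<Sum>ij\<in>UU R - {(i0, j0)}. dlt (F ij (E ij)) w))"
      by (simp only: split mult_1)
    have eqR: "(\<lambda>w. 1 * dlt (F (i0, j0) (E (i0, j0))) w + 1 * (\<Sum>ij\<in>UU R - {(i0, j0)}. (\<lambda>_. (0::'k)) w)) = g"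
      by (simp add: g F_def E_def EE_def)
    show ?thesis using X by (simp only: eqL eqR)
  qed
  have D: "cg (\<lambda>w. c * g w + 1 * y w)
      (\<lambda>w. c * (\<Sum>ij\<in>UU R. dlt (F ij (E ij)) w) + 1 * (\<Sum>ij\<in>UU R. dlt (F ij (Py ij)) w))"
    using cg_lin[OF cg_sym[OF C] add.IH, of c 1] by (simp add: F_def Py_def)
  have "cg (\<lambda>w. c * g w + y w) (\<lambda>w. \<Sum>ij\<in>UU R. dlt (F ij (sm c (E ij) + Py ij)) w)"
    using cg_trans[OF D cg_sym[OF A[unfolded B]]] by simp
  then show ?case by (simp add: PhiE F_def E_def Py_def)
qed

lemma recon0: "p \<in> kspan (PG R) \<Longrightarrow> (\<forall>i j. R i j \<longrightarrow> Phi p i j = 0) \<Longrightarrow> p \<in> II"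
proof -
  assume p: "p \<in> kspan (PG R)" and z: "\<forall>i j. R i j \<longrightarrow> Phi p i j = 0"
  have "(\<lambda>w. \<Sum>ij\<in>UU R. dlt (Gen (fst ij) (snd ij) (Phi p (fst ij) (snd ij))) w)
      = (\<lambda>w. \<Sum>ij\<in>UU R. dlt (Gen (fst ij) (snd ij) 0) w)"
    using z by (intro ext sum.cong) (auto simp: UU_def)
  then have "cg p (\<lambda>w. \<Sum>ij\<in>UU R. dlt (Gen (fst ij) (snd ij) 0) w)"
    by (rule subst[where P="cg p"]) (rule recon[OF p])
  from cg_trans[OF this sum0_I] show ?thesis by (rule cg_I') simp
qed


lemma uniq: "p \<in> Pspan NN \<Longrightarrow> h \<in> Hspan NN \<Longrightarrow> q \<in> Qspan NN \<Longrightarrow> (\<lambda>w. p w + h w + q w) \<in> II \<Longrightarrow>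
  p \<in> II \<and> h \<in> II \<and> q \<in> II"
proof -
  assume pP: "p \<in> Pspan NN" and hH: "h \<in> Hspan NN" and qQ: "q \<in> Qspan NN" and I: "(\<lambda>w. p w + h w + q w) \<in> II"
  have pP': "p \<in> kspan (PG (\<lambda>i j. i < j))" using pP unfolding Pspan_PG .
  have qQ': "q \<in> kspan (PG (\<lambda>i j. i > j))" using qQ unfolding Qspan_PG .
  have hH': "h \<in> kspan {dlt (Br (Gen i j a) (Gen j i b)) | i j a b. wf_mon NN (Gen i j a)}"
    using hH unfolding Hspan_def .
  have fp: "finite {u. p u \<noteq> 0}" by (rule fs_kspan[OF pP']) (use PG_Phi in blast)
  have fq: "finite {u. q u \<noteq> 0}" by (rule fs_kspan[OF qQ']) (use PG_Phi in blast)
  have fh: "finite {u. h u \<noteq> 0}" by (rule fs_kspan[OF hH']) (use Hg_Phi in blast)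
  have shp: "\<And>a b. Phi p a b \<noteq> 0 \<Longrightarrow> a < b"
    by (rule kspan_Phi[OF pP', where R="\<lambda>i j. i < j"]) (use PG_Phi in blast)
  have shq: "\<And>a b. Phi q a b \<noteq> 0 \<Longrightarrow> a > b"
    by (rule kspan_Phi[OF qQ', where R="\<lambda>i j. i > j"]) (use PG_Phi in blast)
  have shh: "\<And>a b. Phi h a b \<noteq> 0 \<Longrightarrow> a = b"
    by (rule kspan_Phi[OF hH', where R="\<lambda>i j. i = j"]) (use Hg_Phi in blast)
  have s0: "\<And>a b. Phi p a b + Phi h a b + Phi q a b = 0"
  proof -
    fix a b
    have "Phi (\<lambda>w. 1 * (\<lambda>w. 1 * p w + 1 * h w) w + 1 * q w) a b
        = sm 1 (Phi (\<lambda>w. 1 * p w + 1 * h w) a b) + sm 1 (Phi q a b)"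
      by (rule Phi_lin[OF fs_lin[OF fp fh] fq])
    moreover have "Phi (\<lambda>w. 1 * p w + 1 * h w) a b = sm 1 (Phi p a b) + sm 1 (Phi h a b)"
      by (rule Phi_lin[OF fp fh])
    moreover have "Phi (\<lambda>w. p w + h w + q w) a b = 0" using Phi_I[OF I] by simp
    ultimately show "Phi p a b + Phi h a b + Phi q a b = 0" by simp
  qed
  have p0: "p \<in> II"
  proof (rule recon0[OF pP'], intro allI impI)
    fix i j :: nat assume "i < j"
    then have "Phi h i j = 0" "Phi q i j = 0" using shh shq by (metis less_irrefl, metis less_asym)
    then show "Phi p i j = 0" using s0[of i j] by simp
  qed
  have q0: "q \<in> II"
  proof (rule recon0[OF qQ'], intro allI impI)
    fix i j :: nat assume "i > j"
    then have "Phi h i j = 0" "Phi p i j = 0" using shh shp by (metis less_irrefl, metis less_asym)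
    then show "Phi q i j = 0" using s0[of i j] by simp
  qed
  have "(\<lambda>w. 1 * (\<lambda>w. 1 * (p w + h w + q w) + (-1) * p w) w + (-1) * q w) \<in> II"
    by (rule I_lin[OF I_lin[OF I p0] q0])
  then have h0: "h \<in> II" by simp
  show ?thesis using p0 h0 q0 by blast
qed

end

theorem lemma3p2:
  fixes sm :: "'k::field \<Rightarrow> 'a::ring_1 \<Rightarrow> 'a" and m n :: nat
  assumes "kalg sm"
    and "(2::'k) \<noteq> 0" and "(3::'k) \<noteq> 0"
    and "m + n \<ge> 3"
  shows "(\<forall>X \<in> freeA (m + n). \<exists>p \<in> Pspan (m + n). \<exists>h \<in> Hspan (m + n). \<exists>q \<in> Qspan (m + n).
            (\<lambda>w. X w - (p w + h w + q w)) \<in> stl_ideal m n sm)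
       \<and> (\<forall>p \<in> Pspan (m + n). \<forall>h \<in> Hspan (m + n). \<forall>q \<in> Qspan (m + n).
            (\<lambda>w. p w + h w + q w) \<in> stl_ideal m n sm \<longrightarrow>
              p \<in> stl_ideal m n sm \<and> h \<in> stl_ideal m n sm \<and> q \<in> stl_ideal m n sm)"
proof -
  interpret stc m n sm by unfold_locales (rule assms(1))
  show ?thesis using existence[OF assms(4)] uniq by blast
qed


end
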